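(* Let $(\Omega,\mathcal F,\mathbb P)$ be a probability space with a measurable action $\{\theta_x\}_{x\in\mathbb R^{2d}}$ under which $\mathbb P$ is invariant, and let $v(x,\omega)=\hat v(\theta_x\omega)$ be a stationary process with $\hat v$ measurable and $\mathbb E|\hat v|<\infty$. For $\ell=(\ell_1,\dots,\ell_{2d})$ with $\ell_i>0$ put $I(\ell)=\prod_{i=1}^{2d}[-\ell_i,\ell_i]$. Then for $\mathbb P$-almost every $\omega$ there is a sequence $\ell^r=(\ell^r_1,\dots,\ell^r_{2d})$ with $\ell^r_i\to\infty$ as $r\to\infty$ for each $i$, such that $$\sup_r\ \sigma(\partial I(\ell^r))^{-1}\int_{\partial I(\ell^r)}|v(x,\omega)|\,\sigma(dx)<\infty,$$ where $\sigma$ is the $(2d-1)$-dimensional surface measure. *)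

theory Defs
  imports "HOL-Probability.Probability"
begin

text \<open>Integral of a nonnegative function over the boundary of I(l) with respect to the
 (n-1)-dimensional surface measure: the boundary is the union of the 2n flat faces
 {x in I(l). x_i = s l_i} (s = -1, 1), which overlap only in null sets; on each face the
 surface measure is (n-1)-dimensional Lebesgue measure in the remaining coordinates.\<close>
definition boundary_integral :: "real^'n \<Rightarrow> (real^'n \<Rightarrow> ennreal) \<Rightarrow> ennreal" where
  "boundary_integral l f =
     (\<Sum>i\<in>UNIV. \<Sum>s\<in>{-1, 1::real}.
        \<integral>\<^sup>+ z. f (\<chi> j. if j = i then s * l $ i else z j)
          \<partial>(PiM (UNIV - {i}) (\<lambda>j. restrict_space lborel {- (l $ j) .. l $ j})))"

definition boundary_measure :: "real^'n \<Rightarrow> ennreal" where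
  "boundary_measure l = boundary_integral l (\<lambda>_. 1)"

end

theory Submission
  imports Defs
begin

abbreviation R :: "real^'n \<Rightarrow> 'n \<Rightarrow> real measure" where
  "R l \<equiv> (\<lambda>j. restrict_space lborel {- (l $ j) .. l $ j})"

lemma psf: "product_sigma_finite (R l)"
  unfolding product_sigma_finite_def
  by (auto intro!: sigma_finite_measure_restrict_space lborel.sigma_finite_measure_axioms)

lemma sfP: "sigma_finite_measure (PiM I (R l))" if "finite I"
  using product_sigma_finite.sigma_finite[OF psf that] .

lemma unit_int:
  assumes "\<And>j. l $ j \<ge> 0"
  shows "(\<integral>\<^sup>+ z. 1 \<partial>(PiM (UNIV - {i}) (R l))) = (\<Prod>j\<in>UNIV - {i}. ennreal (2 * l $ j))"
proof -
  have "(\<integral>\<^sup>+ z. 1 \<partial>(PiM (UNIV - {i}) (R l))) = emeasure (PiM (UNIV - {i}) (R l)) (PiE (UNIV - {i}) (\<lambda>j. {- (l $ j) .. l $ j}))"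
    by (simp add: space_PiM space_restrict_space)
  also have "\<dots> = (\<Prod>j\<in>UNIV - {i}. emeasure (R l j) {- (l $ j) .. l $ j})"
    by (rule product_sigma_finite.emeasure_PiM[OF psf]) (auto simp: sets_restrict_space)
  also have "\<dots> = (\<Prod>j\<in>UNIV - {i}. ennreal (2 * l $ j))"
    using assms by (intro prod.cong refl) (simp add: emeasure_restrict_space)
  finally show ?thesis .
qed

lemma gmeas:
  "(\<lambda>z. (\<chi> j. if j = i then c else z j) :: real^'n) \<in> borel_measurable (PiM (UNIV - {i}) (R l))"
proof (subst borel_measurable_euclidean_space, intro ballI)
  fix b :: "real^'n" assume "b \<in> Basis"
  then obtain k where b: "b = axis k 1" by (auto simp: Basis_vec_def)
  have eq: "(\<lambda>z. (\<chi> j. if j = i then c else z j) \<bullet> b) = (\<lambda>z. if k = i then c else z k)"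
    by (simp add: b cart_eq_inner_axis[symmetric])
  show "(\<lambda>z. (\<chi> j. if j = i then c else z j) \<bullet> b) \<in> borel_measurable (PiM (UNIV - {i}) (R l))"
  proof (cases "k = i")
    case True
    then show ?thesis unfolding eq by simp
  next
    case False
    have m1: "(\<lambda>z. z k) \<in> measurable (PiM (UNIV - {i}) (R l)) (R l k)"
      using False by (intro measurable_component_singleton) auto
    have m2: "(\<lambda>x. x) \<in> measurable (R l k) borel"
      by (intro measurable_restrict_space1) simp
    have "(\<lambda>z. z k) \<in> borel_measurable (PiM (UNIV - {i}) (R l))"
      using measurable_comp[OF m1 m2] by (simp add: comp_def)
    then show ?thesis unfolding eq using False by simp
  qed
qed


lemma joint_meas:
  fixes F :: "real^'n \<Rightarrow> 'a \<Rightarrow> ennreal"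
  assumes Fj: "(\<lambda>(x, \<omega>). F x \<omega>) \<in> borel_measurable (lborel \<Otimes>\<^sub>M M)"
  shows "(\<lambda>(z, \<omega>). F (\<chi> j. if j = i then c else z j) \<omega>) \<in> borel_measurable (PiM (UNIV - {i}) (R l) \<Otimes>\<^sub>M M)"
proof -
  let ?P = "PiM (UNIV - {i}) (R l)"
  let ?g = "(\<lambda>z. (\<chi> j. if j = i then c else z j) :: real^'n)"
  have "(\<lambda>p. ?g (fst p)) \<in> measurable (?P \<Otimes>\<^sub>M M) lborel"
    unfolding measurable_lborel2
    using measurable_comp[OF measurable_fst gmeas[of i c l]] by (simp add: comp_def)
  then have "(\<lambda>p. (?g (fst p), snd p)) \<in> measurable (?P \<Otimes>\<^sub>M M) (lborel \<Otimes>\<^sub>M M)"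
    by (intro measurable_Pair) auto
  from measurable_comp[OF this Fj] show ?thesis
    by (simp add: comp_def case_prod_beta')
qed

lemma expect_bi:
  fixes F :: "real^'n \<Rightarrow> 'a \<Rightarrow> ennreal"
  assumes sf: "sigma_finite_measure M"
    and Fj: "(\<lambda>(x, \<omega>). F x \<omega>) \<in> borel_measurable (lborel \<Otimes>\<^sub>M M)"
    and Finv: "\<And>x. (\<integral>\<^sup>+ \<omega>. F x \<omega> \<partial>M) = C"
  shows "(\<lambda>\<omega>. boundary_integral l (\<lambda>x. F x \<omega>)) \<in> borel_measurable M"
    and "(\<integral>\<^sup>+ \<omega>. boundary_integral l (\<lambda>x. F x \<omega>) \<partial>M) = C * boundary_measure l"
proof -
  interpret M: sigma_finite_measure M by (rule sf)
  have inner: "(\<lambda>\<omega>. \<integral>\<^sup>+ z. F (\<chi> j. if j = i then c else z j) \<omega> \<partial>(PiM (UNIV - {i}) (R l))) \<in> borel_measurable M"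
    for i c
  proof -
    interpret P: sigma_finite_measure "PiM (UNIV - {i}) (R l)" by (rule sfP) simp
    have "(\<lambda>(\<omega>, z). F (\<chi> j. if j = i then c else z j) \<omega>) \<in> borel_measurable (M \<Otimes>\<^sub>M PiM (UNIV - {i}) (R l))"
      using measurable_pair_swap[OF joint_meas[OF Fj, of i c l]] by (simp only: case_prod_beta' prod.swap_def fst_conv snd_conv)
    then show ?thesis
      using P.borel_measurable_nn_integral[of "\<lambda>\<omega> z. F (\<chi> j. if j = i then c else z j) \<omega>" M] by simp
  qed
  show "(\<lambda>\<omega>. boundary_integral l (\<lambda>x. F x \<omega>)) \<in> borel_measurable M"
    unfolding boundary_integral_def using inner by (intro borel_measurable_sum) auto
  have swap: "(\<integral>\<^sup>+ \<omega>. (\<integral>\<^sup>+ z. F (\<chi> j. if j = i then c else z j) \<omega> \<partial>(PiM (UNIV - {i}) (R l))) \<partial>M)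
      = C * (\<integral>\<^sup>+ z. 1 \<partial>(PiM (UNIV - {i}) (R l)))" for i c
  proof -
    interpret P: sigma_finite_measure "PiM (UNIV - {i}) (R l)" by (rule sfP) simp
    interpret pair_sigma_finite "PiM (UNIV - {i}) (R l)" M
      by (simp add: pair_sigma_finite_def P.sigma_finite_measure_axioms M.sigma_finite_measure_axioms)
    have "(\<integral>\<^sup>+ \<omega>. (\<integral>\<^sup>+ z. F (\<chi> j. if j = i then c else z j) \<omega> \<partial>(PiM (UNIV - {i}) (R l))) \<partial>M)
        = (\<integral>\<^sup>+ z. (\<integral>\<^sup>+ \<omega>. F (\<chi> j. if j = i then c else z j) \<omega> \<partial>M) \<partial>(PiM (UNIV - {i}) (R l)))"
      by (rule Fubini') (rule joint_meas[OF Fj])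
    also have "\<dots> = (\<integral>\<^sup>+ z. C \<partial>(PiM (UNIV - {i}) (R l)))" by (simp add: Finv)
    finally show ?thesis by simp
  qed
  have "(\<integral>\<^sup>+ \<omega>. boundary_integral l (\<lambda>x. F x \<omega>) \<partial>M)
     = (\<Sum>i\<in>UNIV. \<integral>\<^sup>+ \<omega>. (\<Sum>s\<in>{-1, 1::real}. \<integral>\<^sup>+ z. F (\<chi> j. if j = i then s * l $ i else z j) \<omega> \<partial>(PiM (UNIV - {i}) (R l))) \<partial>M)"
    unfolding boundary_integral_def using inner by (intro nn_integral_sum borel_measurable_sum) auto
  also have "\<dots> = (\<Sum>i\<in>UNIV. \<Sum>s\<in>{-1, 1::real}. C * (\<integral>\<^sup>+ z. 1 \<partial>(PiM (UNIV - {i}) (R l))))"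
    using inner by (subst nn_integral_sum) (auto simp: swap)
  also have "\<dots> = C * boundary_measure l"
    unfolding boundary_measure_def boundary_integral_def by (simp add: sum_distrib_left mult.left_commute)
  finally show "(\<integral>\<^sup>+ \<omega>. boundary_integral l (\<lambda>x. F x \<omega>) \<partial>M) = C * boundary_measure l" .
qed


lemma bm_pos:
  assumes "\<And>j. l $ j > 0"
  shows "boundary_measure l \<noteq> 0" "boundary_measure l \<noteq> \<top>"
proof -
  have nn: "\<And>j. l $ j \<ge> 0" using assms less_imp_le by blast
  have "boundary_measure l = (\<Sum>i\<in>UNIV. \<Sum>s\<in>{-1, 1::real}. ennreal (\<Prod>j\<in>UNIV - {i}. 2 * l $ j))"
    unfolding boundary_measure_def boundary_integral_def
    using unit_int[of l, OF nn] nn by (simp del: nn_integral_const add: prod_ennreal)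
  also have "\<dots> = (\<Sum>i\<in>UNIV. ennreal (2 * (\<Prod>j\<in>UNIV - {i}. 2 * l $ j)))"
    using nn by (intro sum.cong refl) (simp add: ennreal_mult prod_nonneg)
  also have "\<dots> = ennreal (\<Sum>i\<in>UNIV. 2 * (\<Prod>j\<in>UNIV - {i}. 2 * l $ j))"
    using nn by (simp add: prod_nonneg)
  finally have eq: "boundary_measure l = ennreal (\<Sum>i\<in>UNIV. 2 * (\<Prod>j\<in>UNIV - {i}. 2 * l $ j))" .
  have "(\<Sum>i\<in>UNIV. 2 * (\<Prod>j\<in>UNIV - {i}. 2 * l $ j)) > 0"
    using assms by (intro sum_pos mult_pos_pos prod_pos) auto
  then show "boundary_measure l \<noteq> 0" "boundary_measure l \<noteq> \<top>" unfolding eq by auto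
qed


theorem proposition3p3:
  fixes M :: "'a measure"
    and \<theta> :: "real^'n \<Rightarrow> 'a \<Rightarrow> 'a"
    and vhat :: "'a \<Rightarrow> real"
    and d :: nat
  assumes "prob_space M"
    and dim: "CARD('n) = 2 * d"
    and action_meas: "(\<lambda>(x, \<omega>). \<theta> x \<omega>) \<in> measurable (lborel \<Otimes>\<^sub>M M) M"
    and action_zero: "\<And>\<omega>. \<omega> \<in> space M \<Longrightarrow> \<theta> 0 \<omega> = \<omega>"
    and action_add: "\<And>x y \<omega>. \<omega> \<in> space M \<Longrightarrow> \<theta> (x + y) \<omega> = \<theta> x (\<theta> y \<omega>)"
    and invariant: "\<And>x. distr M M (\<theta> x) = M"
    and vhat_meas: "vhat \<in> borel_measurable M"
    and vhat_int: "integrable M vhat"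
  shows "AE \<omega> in M. \<exists>l :: nat \<Rightarrow> real^'n.
           (\<forall>r i. l r $ i > 0) \<and>
           (\<forall>i. filterlim (\<lambda>r. l r $ i) at_top sequentially) \<and>
           (SUP r. boundary_integral (l r) (\<lambda>x. ennreal \<bar>vhat (\<theta> x \<omega>)\<bar>)
                     / boundary_measure (l r)) < \<infinity>"
proof -
  interpret P: prob_space M by fact
  define F where "F x \<omega> = ennreal \<bar>vhat (\<theta> x \<omega>)\<bar>" for x \<omega>
  define C where "C = (\<integral>\<^sup>+ \<omega>. ennreal \<bar>vhat \<omega>\<bar> \<partial>M)"
  have Cfin: "C < \<infinity>"
    using vhat_int unfolding C_def integrable_iff_bounded by simp
  have Fj: "(\<lambda>(x, \<omega>). F x \<omega>) \<in> borel_measurable (lborel \<Otimes>\<^sub>M M)"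
  proof -
    have "(\<lambda>p. ennreal \<bar>vhat p\<bar>) \<in> borel_measurable M" using vhat_meas by measurable
    from measurable_comp[OF action_meas this] show ?thesis
      by (simp add: F_def comp_def case_prod_beta')
  qed
  have Finv: "(\<integral>\<^sup>+ \<omega>. F x \<omega> \<partial>M) = C" for x
  proof -
    have "(\<lambda>\<omega>. (x, \<omega>)) \<in> measurable M (lborel \<Otimes>\<^sub>M M)"
      by (intro measurable_Pair) auto
    from measurable_comp[OF this action_meas]
    have T: "\<theta> x \<in> measurable M M" by (simp add: comp_def)
    have "C = (\<integral>\<^sup>+ \<omega>. ennreal \<bar>vhat \<omega>\<bar> \<partial>(distr M M (\<theta> x)))"
      unfolding C_def invariant ..
    also have "\<dots> = (\<integral>\<^sup>+ \<omega>. F x \<omega> \<partial>M)"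
      unfolding F_def using vhat_meas by (subst nn_integral_distr[OF T]) auto
    finally show ?thesis ..
  qed
  define L :: "nat \<Rightarrow> real^'n" where "L n = (\<chi> j. real n + 1)" for n
  have Lpos: "L n $ j > 0" for n j by (simp add: L_def)
  define A where "A n \<omega> = boundary_integral (L n) (\<lambda>x. F x \<omega>) / boundary_measure (L n)" for n \<omega>
  have Ameas: "A n \<in> borel_measurable M" for n
    unfolding A_def using expect_bi(1)[OF P.sigma_finite_measure_axioms Fj Finv] by measurable
  have Aint: "(\<integral>\<^sup>+ \<omega>. A n \<omega> \<partial>M) = C" for n
  proof -
    have "(\<integral>\<^sup>+ \<omega>. A n \<omega> \<partial>M) = (\<integral>\<^sup>+ \<omega>. boundary_integral (L n) (\<lambda>x. F x \<omega>) \<partial>M) / boundary_measure (L n)"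
      unfolding A_def by (rule nn_integral_divide[OF expect_bi(1)[OF P.sigma_finite_measure_axioms Fj Finv]])
    also have "\<dots> = C * boundary_measure (L n) / boundary_measure (L n)"
      by (simp add: expect_bi(2)[OF P.sigma_finite_measure_axioms Fj Finv])
    also have "\<dots> = C" using bm_pos[of "L n", OF Lpos] by (simp add: ennreal_mult_divide_eq)
    finally show ?thesis .
  qed
  have "(\<integral>\<^sup>+ \<omega>. liminf (\<lambda>n. A n \<omega>) \<partial>M) \<le> liminf (\<lambda>n. \<integral>\<^sup>+ \<omega>. A n \<omega> \<partial>M)"
    by (rule nn_integral_liminf[OF Ameas])
  also have "\<dots> = C" by (simp add: Aint Liminf_const)
  finally have "(\<integral>\<^sup>+ \<omega>. liminf (\<lambda>n. A n \<omega>) \<partial>M) \<noteq> \<infinity>" using Cfin by auto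
  then have AEfin: "AE \<omega> in M. liminf (\<lambda>n. A n \<omega>) \<noteq> \<infinity>"
    by (intro nn_integral_PInf_AE) (auto intro: borel_measurable_liminf Ameas)
  show ?thesis
  proof (rule AE_mp[OF AEfin], rule AE_I2, rule impI)
    fix \<omega> assume fin: "liminf (\<lambda>n. A n \<omega>) \<noteq> \<infinity>"
    then have "\<not> \<infinity> \<le> liminf (\<lambda>n. A n \<omega>)" by (simp add: top_unique)
    then obtain y where y: "y < \<infinity>" and ne: "\<not> eventually (\<lambda>n. y < A n \<omega>) sequentially"
      unfolding le_Liminf_iff by blast
    have "frequently (\<lambda>n. A n \<omega> \<le> y) sequentially"
      using ne by (simp add: not_eventually not_less)
    then have ex: "\<forall>r. \<exists>n\<ge>r. A n \<omega> \<le> y" unfolding frequently_sequentially by blast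
    define N where "N r = (SOME n. n \<ge> r \<and> A n \<omega> \<le> y)" for r
    have N: "N r \<ge> r \<and> A (N r) \<omega> \<le> y" for r
      unfolding N_def using someI_ex[OF ex[rule_format, of r]] .
    show "\<exists>l :: nat \<Rightarrow> real^'n.
           (\<forall>r i. l r $ i > 0) \<and>
           (\<forall>i. filterlim (\<lambda>r. l r $ i) at_top sequentially) \<and>
           (SUP r. boundary_integral (l r) (\<lambda>x. ennreal \<bar>vhat (\<theta> x \<omega>)\<bar>)
                     / boundary_measure (l r)) < \<infinity>"
    proof (intro exI[of _ "\<lambda>r. L (N r)"] conjI allI)
      show "L (N r) $ i > 0" for r i by (rule Lpos)
      show "filterlim (\<lambda>r. L (N r) $ i) at_top sequentially" for i
      proof (rule filterlim_at_top_mono[OF filterlim_real_sequentially])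
        show "\<forall>\<^sub>F r in sequentially. real r \<le> L (N r) $ i"
        proof (intro always_eventually allI)
          fix r :: nat
          have "r \<le> N r" using N by blast
          then show "real r \<le> L (N r) $ i" by (simp add: L_def)
        qed
      qed
      have "(SUP r. boundary_integral (L (N r)) (\<lambda>x. ennreal \<bar>vhat (\<theta> x \<omega>)\<bar>)
                     / boundary_measure (L (N r))) \<le> y"
        using N by (intro SUP_least) (auto simp: A_def F_def)
      then show "(SUP r. boundary_integral (L (N r)) (\<lambda>x. ennreal \<bar>vhat (\<theta> x \<omega>)\<bar>)
                     / boundary_measure (L (N r))) < \<infinity>"
        using y by (rule le_less_trans)
    qed
  qed
qed

end
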